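(* Let $\varrho:\mathcal{Z}\to\mathbb{R}\cup\{+\infty\}$ be a coherent risk measure with preference to small outcomes that satisfies property T: $\varrho[X+\alpha e^i]=\varrho[X]+\alpha$ for all $X\in\mathcal{Z}$, $\alpha\in\mathbb{R}$, $i=1,\dots,m$. Then $\varrho$ is linear on constant vectors, i.e. the map $\mathbb{R}^m\ni a\mapsto\varrho[a]$ (with $a$ viewed as a constant random vector) is linear.
   Context: $(\Omega,\mathcal{F},P)$ is a probability space, $m\ge1$, $p\in[1,\infty)$, $\mathcal{Z}=\mathcal{L}_p(\Omega,\mathcal{F},P;\mathbb{R}^m)$ with norm topology. $e^i\in\mathbb{R}^m$ is the $i$-th unit vector and $\mathbb{I}$ the constant random vector with all components $1$. A coherent risk measure with preference to small outcomes is a lower semicontinuous functional $\varrho:\mathcal{Z}\to\mathbb{R}\cup\{+\infty\}$ with nonempty domain satisfying: (A1) convexity; (A2) $X_i\ge Y_i$ a.s. for all $i$ implies $\varrho[X]\ge\varrho[Y]$; (A3) $\varrho[tX]=t\varrho[X]$ for $t>0$; (A4) $\varrho[X+a\mathbb{I}]=\varrho[X]+a\varrho[\mathbb{I}]$ for all $X\in\mathcal{Z}$, $a\in\mathbb{R}$. *)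

theory Defs
  imports "HOL-Probability.Probability"
begin

text \<open>The space Z = L_p(Omega, F, P; R^m), represented by measurable representatives
  (functions); R^m is real^'m with the Euclidean norm.\<close>

definition Lp_space :: "'a measure \<Rightarrow> real \<Rightarrow> ('a \<Rightarrow> real^'m) set" where
  "Lp_space M p = {X. X \<in> borel_measurable M \<and> integrable M (\<lambda>\<omega>. norm (X \<omega>) powr p)}"

definition Lp_dist :: "'a measure \<Rightarrow> real \<Rightarrow> ('a \<Rightarrow> real^'m) \<Rightarrow> ('a \<Rightarrow> real^'m) \<Rightarrow> real" where
  "Lp_dist M p X Y = (integral\<^sup>L M (\<lambda>\<omega>. norm (X \<omega> - Y \<omega>) powr p)) powr (1 / p)"

definition ones :: "'a \<Rightarrow> real^'m" where
  "ones = (\<lambda>\<omega>. \<chi> i. 1)"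

definition coherent_risk_measure ::
  "'a measure \<Rightarrow> real \<Rightarrow> (('a \<Rightarrow> real^'m) \<Rightarrow> ereal) \<Rightarrow> bool" where
  "coherent_risk_measure M p \<rho> \<longleftrightarrow>
     \<comment> \<open>values in R \<union> {+\<infinity>}\<close>
     (\<forall>X \<in> Lp_space M p. \<rho> X \<noteq> -\<infinity>) \<and>
     \<comment> \<open>nonempty domain\<close>
     (\<exists>X \<in> Lp_space M p. \<rho> X < \<infinity>) \<and>
     \<comment> \<open>lower semicontinuity w.r.t. the L_p norm topology\<close>
     (\<forall>X Xs. X \<in> Lp_space M p \<longrightarrow> (\<forall>n. Xs n \<in> Lp_space M p) \<longrightarrow>
        (\<lambda>n. Lp_dist M p (Xs n) X) \<longlonglongrightarrow> 0 \<longrightarrow>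
        \<rho> X \<le> liminf (\<lambda>n. \<rho> (Xs n))) \<and>
     \<comment> \<open>(A1) convexity\<close>
     (\<forall>X \<in> Lp_space M p. \<forall>Y \<in> Lp_space M p. \<forall>t::real. 0 \<le> t \<and> t \<le> 1 \<longrightarrow>
        \<rho> (\<lambda>\<omega>. t *\<^sub>R X \<omega> + (1 - t) *\<^sub>R Y \<omega>) \<le> ereal t * \<rho> X + ereal (1 - t) * \<rho> Y) \<and>
     \<comment> \<open>(A2) monotonicity\<close>
     (\<forall>X \<in> Lp_space M p. \<forall>Y \<in> Lp_space M p.
        (AE \<omega> in M. \<forall>i. X \<omega> $ i \<ge> Y \<omega> $ i) \<longrightarrow> \<rho> X \<ge> \<rho> Y) \<and>
     \<comment> \<open>(A3) positive homogeneity\<close>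
     (\<forall>X \<in> Lp_space M p. \<forall>t::real. t > 0 \<longrightarrow> \<rho> (\<lambda>\<omega>. t *\<^sub>R X \<omega>) = ereal t * \<rho> X) \<and>
     \<comment> \<open>(A4) translation by multiples of the all-ones vector\<close>
     (\<forall>X \<in> Lp_space M p. \<forall>a::real.
        \<rho> (\<lambda>\<omega>. X \<omega> + a *\<^sub>R ones \<omega>) = \<rho> X + ereal a * \<rho> ones)"

definition property_T :: "'a measure \<Rightarrow> real \<Rightarrow> (('a \<Rightarrow> real^'m) \<Rightarrow> ereal) \<Rightarrow> bool" where
  "property_T M p \<rho> \<longleftrightarrow>
     (\<forall>X \<in> Lp_space M p. \<forall>\<alpha>::real. \<forall>i.
        \<rho> (\<lambda>\<omega>. X \<omega> + \<alpha> *\<^sub>R axis i 1) = \<rho> X + ereal \<alpha>)"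

end

theory Submission
  imports Defs
begin

lemma const_Lp:
  assumes "prob_space M"
  shows "(\<lambda>\<omega>. c) \<in> Lp_space M p"
proof -
  interpret prob_space M by fact
  show ?thesis unfolding Lp_space_def by auto
qed

lemma scale_Lp:
  assumes "X \<in> Lp_space M p" "t \<ge> 0"
  shows "(\<lambda>\<omega>. t *\<^sub>R X \<omega>) \<in> Lp_space M p"
proof -
  have m: "X \<in> borel_measurable M" and i: "integrable M (\<lambda>\<omega>. norm (X \<omega>) powr p)"
    using assms unfolding Lp_space_def by auto
  have "(\<lambda>\<omega>. norm (t *\<^sub>R X \<omega>) powr p) = (\<lambda>\<omega>. t powr p * norm (X \<omega>) powr p)"
    using assms(2) by (simp add: powr_mult)
  moreover have "integrable M (\<lambda>\<omega>. t powr p * norm (X \<omega>) powr p)"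
    using i by (rule integrable_mult_right)
  ultimately show ?thesis using m unfolding Lp_space_def by auto
qed

lemma dist_scale:
  assumes "X \<in> Lp_space M p" "t \<ge> 0" "p > 0"
  shows "Lp_dist M p (\<lambda>\<omega>. t *\<^sub>R X \<omega>) (\<lambda>\<omega>. 0) = t * Lp_dist M p X (\<lambda>\<omega>. 0)"
proof -
  define I where "I = integral\<^sup>L M (\<lambda>\<omega>. norm (X \<omega>) powr p)"
  have I: "0 \<le> I" unfolding I_def by (rule integral_nonneg_AE) simp
  have "(\<lambda>\<omega>. norm (t *\<^sub>R X \<omega> - 0) powr p) = (\<lambda>\<omega>. t powr p * norm (X \<omega>) powr p)"
    using assms(2) by (simp add: powr_mult)
  hence "Lp_dist M p (\<lambda>\<omega>. t *\<^sub>R X \<omega>) (\<lambda>\<omega>. 0) = (t powr p * I) powr (1/p)"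
    unfolding Lp_dist_def I_def by simp
  also have "\<dots> = (t powr p) powr (1/p) * I powr (1/p)"
    by (rule powr_mult)
  also have "(t powr p) powr (1/p) = t" using assms by (simp add: powr_powr)
  also have "I powr (1/p) = Lp_dist M p X (\<lambda>\<omega>. 0)" unfolding Lp_dist_def I_def by simp
  finally show ?thesis .
qed

theorem corollary3:
  fixes M :: "'a measure" and p :: real and \<rho> :: "('a \<Rightarrow> real^'m) \<Rightarrow> ereal"
  assumes "prob_space M"
    and "1 \<le> p"
    and "coherent_risk_measure M p \<rho>"
    and "property_T M p \<rho>"
  shows "\<exists>f :: real^'m \<Rightarrow> real. linear f \<and> (\<forall>a. \<rho> (\<lambda>\<omega>. a) = ereal (f a))"
proof -
  note C = assms(3)[unfolded coherent_risk_measure_def]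
  have ninf: "\<And>X. X \<in> Lp_space M p \<Longrightarrow> \<rho> X \<noteq> -\<infinity>" using C by blast
  obtain X0 where X0: "X0 \<in> Lp_space M p" "\<rho> X0 < \<infinity>" using C by blast
  obtain r where r: "\<rho> X0 = ereal r" using X0 ninf[OF X0(1)] by (cases "\<rho> X0") auto
  have lsc: "\<And>X Xs. X \<in> Lp_space M p \<Longrightarrow> (\<forall>n. Xs n \<in> Lp_space M p) \<Longrightarrow>
        (\<lambda>n. Lp_dist M p (Xs n) X) \<longlonglongrightarrow> 0 \<Longrightarrow> \<rho> X \<le> liminf (\<lambda>n. \<rho> (Xs n))"
    using C by blast
  have hom: "\<And>X t. X \<in> Lp_space M p \<Longrightarrow> t > 0 \<Longrightarrow> \<rho> (\<lambda>\<omega>. t *\<^sub>R X \<omega>) = ereal t * \<rho> X"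
    using C by blast
  have c0: "(\<lambda>\<omega>. 0::real^'m) \<in> Lp_space M p" by (rule const_Lp[OF assms(1)])
  define Xs where "Xs n = (\<lambda>\<omega>. (1 / real (Suc n)) *\<^sub>R X0 \<omega>)" for n
  have XsL: "\<forall>n. Xs n \<in> Lp_space M p" unfolding Xs_def using scale_Lp[OF X0(1)] by simp
  have "(\<lambda>n. (1 / real (Suc n)) * Lp_dist M p X0 (\<lambda>\<omega>. 0)) \<longlonglongrightarrow> 0 * Lp_dist M p X0 (\<lambda>\<omega>. 0)"
    by (intro tendsto_intros LIMSEQ_inverse_real_of_nat[unfolded inverse_eq_divide])
  hence "(\<lambda>n. Lp_dist M p (Xs n) (\<lambda>\<omega>. 0)) \<longlonglongrightarrow> 0"
    unfolding Xs_def using dist_scale[OF X0(1)] assms(2) by simp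
  hence le1: "\<rho> (\<lambda>\<omega>. 0) \<le> liminf (\<lambda>n. \<rho> (Xs n))" using lsc[OF c0 XsL] by blast
  have "\<And>n. \<rho> (Xs n) = ereal (r / real (Suc n))"
    unfolding Xs_def using hom[OF X0(1)] r by simp
  moreover have "(\<lambda>n. ereal (r / real (Suc n))) \<longlonglongrightarrow> ereal 0"
    unfolding lim_ereal
    using tendsto_mult[OF tendsto_const[of r] LIMSEQ_inverse_real_of_nat]
    by (simp add: divide_inverse)
  ultimately have "liminf (\<lambda>n. \<rho> (Xs n)) = 0"
    by (simp add: lim_imp_Liminf zero_ereal_def)
  with le1 have le0: "\<rho> (\<lambda>\<omega>. 0) \<le> 0" by simp
  obtain s where s: "\<rho> (\<lambda>\<omega>. 0) = ereal s" using ninf[OF c0] le0 by (cases "\<rho> (\<lambda>\<omega>. 0)") auto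
  have "\<rho> (\<lambda>\<omega>. (2::real) *\<^sub>R (0::real^'m)) = ereal 2 * \<rho> (\<lambda>\<omega>. 0)"
    using hom[OF c0, of 2] by simp
  hence "s = 2 * s" using s by simp
  hence z: "\<rho> (\<lambda>\<omega>. 0) = 0" using s by simp
  have T: "\<rho> (\<lambda>\<omega>. c + \<alpha> *\<^sub>R axis i 1) = \<rho> (\<lambda>\<omega>. c) + ereal \<alpha>" for c \<alpha> i
  proof -
    have "(\<lambda>\<omega>. c) \<in> Lp_space M p" by (rule const_Lp[OF assms(1)])
    from assms(4)[unfolded property_T_def, rule_format, OF this, of \<alpha> i] show ?thesis by (simp only:)
  qed
  have ind: "\<rho> (\<lambda>\<omega>. \<Sum>i\<in>S. a$i *\<^sub>R axis i 1) = ereal (\<Sum>i\<in>S. a$i)" if "finite S" for S and a :: "real^'m"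
    using that
  proof (induction S rule: finite_induct)
    case empty
    then show ?case using z by simp
  next
    case (insert x F)
    have "\<rho> (\<lambda>\<omega>. (\<Sum>i\<in>F. a$i *\<^sub>R axis i 1) + a$x *\<^sub>R axis x 1) = \<rho> (\<lambda>\<omega>. \<Sum>i\<in>F. a$i *\<^sub>R axis i 1) + ereal (a$x)"
      by (rule T)
    also have "\<dots> = ereal ((\<Sum>i\<in>F. a$i) + a$x)" using insert(3) by simp
    finally show ?case
      by (simp only: sum.insert[OF insert(1,2)] add.commute[of "a$x *\<^sub>R axis x 1"] add.commute[of "a$x"])
  qed
  have eq: "(\<Sum>i\<in>UNIV. a$i *\<^sub>R axis i 1) = a" for a :: "real^'m"
    using basis_expansion[of a] unfolding scalar_mult_eq_scaleR .
  show ?thesis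
  proof (intro exI conjI allI)
    show "linear (\<lambda>a::real^'m. \<Sum>i\<in>UNIV. a$i)"
    proof (rule linearI)
      fix x y :: "real^'m" and c :: real
      show "(\<Sum>i\<in>UNIV. (x + y)$i) = (\<Sum>i\<in>UNIV. x$i) + (\<Sum>i\<in>UNIV. y$i)"
        by (simp add: sum.distrib)
      show "(\<Sum>i\<in>UNIV. (c *\<^sub>R x)$i) = c *\<^sub>R (\<Sum>i\<in>UNIV. x$i)"
        by (simp add: sum_distrib_left)
    qed
    fix a :: "real^'m"
    show "\<rho> (\<lambda>\<omega>. a) = ereal (\<Sum>i\<in>UNIV. a$i)"
      using ind[of UNIV a] eq[of a] by simp
  qed
qed

end
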